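(* In the Karma DPG (with the pay-bid-to-society karma transition), the immediate reward $r[x,a](\mu,\pi)$ and the state transition probability $p[x^+\mid x,a](\mu,\pi)$ are Lipschitz continuous in $s=(\mu,\pi)$ on $\mathcal{M}\times\Pi$. That is, there exist constants $L_r,L_p>0$ such that for all $s,s'\in\mathcal{M}\times\Pi$, $$\sup_{x\in\mathcal{X},\,a\in\mathcal{A}[x]}|r[x,a](s)-r[x,a](s')|\le L_r\|s-s'\|,\qquad \sup_{x,x^+\in\mathcal{X},\,a\in\mathcal{A}[x]}|p[x^+\mid x,a](s)-p[x^+\mid x,a](s')|\le L_p\|s-s'\|.$$
   Context: Karma DPG. Let $\mathcal{U}\subset\mathbb{R}_{>0}$ be a finite set of urgency levels and $K\in\mathbb{N}$. The state space is $\mathcal{X}=\mathcal{U}\times\{0,\dots,K\}$, states written $x=(u,k)$. In state $(u,k)$ the action set is $\mathcal{A}[k]=\{0,1,\dots,k\}$ (bids). $\mathcal{M}=\Delta(\mathcal{X})$ is the set of probability distributions on $\mathcal{X}$ and $\Pi$ is the set of stationary policies $\pi$, i.e. $\pi[\cdot\mid x]\in\Delta(\mathcal{A}[x])$ for every $x$; $\mathcal{M}\times\Pi$ is viewed as a compact subset of a finite-dimensional real vector space equipped with a fixed norm $\|\cdot\|$ (e.g. the sup norm of the concatenated vector). Let $\phi[u^+\mid u]$ be a fixed Markov kernel on $\mathcal{U}$. For bids $a,a'$ let $\mathbb{P}[\texttt{win}\mid a,a']=1$ if $a>a'$, $0$ if $a<a'$, $1/2$ if $a=a'$. Define $\gamma[\texttt{win}\mid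 a](\mu,\pi)=\sum_{(u',k')\in\mathcal{X}}\sum_{a'\in\mathcal{A}[k']}\mu[u',k']\,\pi[a'\mid u',k']\,\mathbb{P}[\texttt{win}\mid a,a']$ and $\gamma[\texttt{lose}\mid a]=1-\gamma[\texttt{win}\mid a]$. Reward: $r[(u,k),a](\mu,\pi)=u\,\gamma[\texttt{win}\mid a](\mu,\pi)$. Pay-bid-to-society karma transition: let $\bar p(\mu,\pi)=\sum_{(u,k)}\mu[u,k]\sum_{a}\pi[a\mid u,k]\,\gamma[\texttt{win}\mid a](\mu,\pi)\,a$, $f^{\text{low}}=\lceil\bar p\rceil-\bar p$, $f^{\text{high}}=1-f^{\text{low}}$. Set $\kappa[k^+\mid k,a,\texttt{win}]=f^{\text{low}}\mathbf 1[k^+=k-a+\lfloor\bar p\rfloor]+f^{\text{high}}\mathbf 1[k^+=k-a+\lceil\bar p\rceil]$, $\kappa[k^+\mid k,a,\texttt{lose}]=f^{\text{low}}\mathbf 1[k^+=k+\lfloor\bar p\rfloor]+f^{\text{high}}\mathbf 1[k^+=k+\lceil\bar p\rceil]$, and $\kappa[k^+\mid k,a](\mu,\pi)=\sum_{o\in\{\texttt{win},\texttt{lose}\}}\gamma[o\mid a](\mu,\pi)\,\kappa[k^+\mid k,a,o](\mu,\pi)$. Transition: $p[(u^+,k^+)\mid (u,k),a](\mu,\pi)=\phi[u^+\mid u]\,\kappa[k^+\mid k,a](\mu,\pi)$. *)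

theory Defs
  imports Complex_Main
begin

text \<open>States x = (u,k) :: real \<times> nat. A population distribution mu :: state \<Rightarrow> real,
 a stationary policy pi :: state \<Rightarrow> nat \<Rightarrow> real (pi x a = probability of bid a in state x).\<close>

type_synonym kstate = "real \<times> nat"

definition states :: "real set \<Rightarrow> nat \<Rightarrow> kstate set" where
  "states U K = U \<times> {0..K}"

definition actions :: "kstate \<Rightarrow> nat set" where
  "actions x = {0..snd x}"

definition is_distr :: "real set \<Rightarrow> nat \<Rightarrow> (kstate \<Rightarrow> real) \<Rightarrow> bool" where
  "is_distr U K mu \<longleftrightarrow> (\<forall>x\<in>states U K. mu x \<ge> 0) \<and> (\<Sum>x\<in>states U K. mu x) = 1"

definition is_policy :: "real set \<Rightarrow> nat \<Rightarrow> (kstate \<Rightarrow> nat \<Rightarrow> real) \<Rightarrow> bool" where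
  "is_policy U K pol \<longleftrightarrow> (\<forall>x\<in>states U K. (\<forall>a\<in>actions x. pol x a \<ge> 0) \<and> (\<Sum>a\<in>actions x. pol x a) = 1)"

definition MPi :: "real set \<Rightarrow> nat \<Rightarrow> ((kstate \<Rightarrow> real) \<times> (kstate \<Rightarrow> nat \<Rightarrow> real)) set" where
  "MPi U K = {(mu, pol). is_distr U K mu \<and> is_policy U K pol}"

definition snorm_dist :: "real set \<Rightarrow> nat \<Rightarrow> (kstate \<Rightarrow> real) \<times> (kstate \<Rightarrow> nat \<Rightarrow> real)
     \<Rightarrow> (kstate \<Rightarrow> real) \<times> (kstate \<Rightarrow> nat \<Rightarrow> real) \<Rightarrow> real" where
  "snorm_dist U K s s' =
     Max (insert 0 ((\<lambda>x. \<bar>fst s x - fst s' x\<bar>) ` states U K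
                  \<union> (\<lambda>(x,a). \<bar>snd s x a - snd s' x a\<bar>) ` (SIGMA x:states U K. actions x)))"

definition win_prob :: "nat \<Rightarrow> nat \<Rightarrow> real" where
  "win_prob a a' = (if a > a' then 1 else if a < a' then 0 else 1/2)"

definition gamma_win :: "real set \<Rightarrow> nat \<Rightarrow> (kstate \<Rightarrow> real) \<times> (kstate \<Rightarrow> nat \<Rightarrow> real) \<Rightarrow> nat \<Rightarrow> real" where
  "gamma_win U K s a =
     (\<Sum>x'\<in>states U K. \<Sum>a'\<in>actions x'. fst s x' * snd s x' a' * win_prob a a')"

definition reward :: "real set \<Rightarrow> nat \<Rightarrow> (kstate \<Rightarrow> real) \<times> (kstate \<Rightarrow> nat \<Rightarrow> real) \<Rightarrow> kstate \<Rightarrow> nat \<Rightarrow> real" where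
  "reward U K s x a = fst x * gamma_win U K s a"

definition pbar :: "real set \<Rightarrow> nat \<Rightarrow> (kstate \<Rightarrow> real) \<times> (kstate \<Rightarrow> nat \<Rightarrow> real) \<Rightarrow> real" where
  "pbar U K s = (\<Sum>x\<in>states U K. fst s x * (\<Sum>a\<in>actions x. snd s x a * gamma_win U K s a * real a))"

definition f_low :: "real set \<Rightarrow> nat \<Rightarrow> (kstate \<Rightarrow> real) \<times> (kstate \<Rightarrow> nat \<Rightarrow> real) \<Rightarrow> real" where
  "f_low U K s = real_of_int \<lceil>pbar U K s\<rceil> - pbar U K s"

definition f_high :: "real set \<Rightarrow> nat \<Rightarrow> (kstate \<Rightarrow> real) \<times> (kstate \<Rightarrow> nat \<Rightarrow> real) \<Rightarrow> real" where
  "f_high U K s = 1 - f_low U K s"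

definition ind :: "bool \<Rightarrow> real" where
  "ind b = (if b then 1 else 0)"

definition kappa_win :: "real set \<Rightarrow> nat \<Rightarrow> (kstate \<Rightarrow> real) \<times> (kstate \<Rightarrow> nat \<Rightarrow> real) \<Rightarrow> nat \<Rightarrow> nat \<Rightarrow> nat \<Rightarrow> real" where
  "kappa_win U K s k a kp =
     f_low U K s * ind (int kp = int k - int a + \<lfloor>pbar U K s\<rfloor>)
   + f_high U K s * ind (int kp = int k - int a + \<lceil>pbar U K s\<rceil>)"

definition kappa_lose :: "real set \<Rightarrow> nat \<Rightarrow> (kstate \<Rightarrow> real) \<times> (kstate \<Rightarrow> nat \<Rightarrow> real) \<Rightarrow> nat \<Rightarrow> nat \<Rightarrow> nat \<Rightarrow> real" where
  "kappa_lose U K s k a kp =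
     f_low U K s * ind (int kp = int k + \<lfloor>pbar U K s\<rfloor>)
   + f_high U K s * ind (int kp = int k + \<lceil>pbar U K s\<rceil>)"

definition kappa :: "real set \<Rightarrow> nat \<Rightarrow> (kstate \<Rightarrow> real) \<times> (kstate \<Rightarrow> nat \<Rightarrow> real) \<Rightarrow> nat \<Rightarrow> nat \<Rightarrow> nat \<Rightarrow> real" where
  "kappa U K s k a kp =
     gamma_win U K s a * kappa_win U K s k a kp + (1 - gamma_win U K s a) * kappa_lose U K s k a kp"

text \<open>phi u u' = phi[u' | u].\<close>
definition trans_prob :: "(real \<Rightarrow> real \<Rightarrow> real) \<Rightarrow> real set \<Rightarrow> nat \<Rightarrow> (kstate \<Rightarrow> real) \<times> (kstate \<Rightarrow> nat \<Rightarrow> real)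
     \<Rightarrow> kstate \<Rightarrow> nat \<Rightarrow> kstate \<Rightarrow> real" where
  "trans_prob phi U K s x a xp = phi (fst x) (fst xp) * kappa U K s (snd x) a (snd xp)"

end

theory Submission imports Defs begin
lemma tent: fixes j::int and p::real
  shows "(real_of_int \<lceil>p\<rceil> - p) * ind (j = \<lfloor>p\<rfloor>) + (1 - (real_of_int \<lceil>p\<rceil> - p)) * ind (j = \<lceil>p\<rceil>) = max 0 (1 - \<bar>real_of_int j - p\<bar>)"
proof (cases "p \<in> \<int>")
  case True
  then obtain n where n: "p = of_int n" by (auto elim: Ints_cases)
  show ?thesis unfolding n ind_def by auto
next
  case False
  then have c: "\<lceil>p\<rceil> = \<lfloor>p\<rfloor> + 1" using ceiling_altdef[of p] by (metis Ints_of_int) 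
  have f1: "of_int \<lfloor>p\<rfloor> \<le> p" "p < of_int \<lfloor>p\<rfloor> + 1" by linarith+
  consider "j = \<lfloor>p\<rfloor>" | "j = \<lfloor>p\<rfloor> + 1" | "j \<le> \<lfloor>p\<rfloor> - 1" | "j \<ge> \<lfloor>p\<rfloor> + 2" by linarith
  then show ?thesis
  proof cases
    case 1 then show ?thesis unfolding ind_def c using f1 by (auto simp: max_def; linarith)
  next
    case 2 then show ?thesis unfolding ind_def c using f1 by (auto simp: max_def; linarith)
  next
    case 3 then have "real_of_int j \<le> of_int \<lfloor>p\<rfloor> - 1" by linarith
    then show ?thesis unfolding ind_def c using f1 3 by (auto simp: max_def; linarith)
  next
    case 4 then have "real_of_int j \<ge> of_int \<lfloor>p\<rfloor> + 2" by linarith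
    then show ?thesis unfolding ind_def c using f1 4 by (auto simp: max_def; linarith)
  qed
qed
lemma tent_lip: fixes q p p'::real
  shows "\<bar>max 0 (1 - \<bar>q - p\<bar>) - max 0 (1 - \<bar>q - p'\<bar>)\<bar> \<le> \<bar>p - p'\<bar>"
  by (simp add: max_def abs_if)


definition lb :: "real \<Rightarrow> real \<Rightarrow> real \<Rightarrow> real \<Rightarrow> real \<Rightarrow> bool" where
  "lb B L d f g \<longleftrightarrow> \<bar>f\<bar> \<le> B \<and> \<bar>g\<bar> \<le> B \<and> \<bar>f - g\<bar> \<le> L * d"

lemma lb_mult:
  assumes "lb A La d a a'" "lb B Lb d b b'"
  shows "lb (A*B) (A*Lb + B*La) d (a*b) (a'*b')"
proof -
  have A: "\<bar>a\<bar> \<le> A" "\<bar>a'\<bar> \<le> A" "\<bar>a - a'\<bar> \<le> La * d" using assms(1) by (auto simp: lb_def)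
  have B: "\<bar>b\<bar> \<le> B" "\<bar>b'\<bar> \<le> B" "\<bar>b - b'\<bar> \<le> Lb * d" using assms(2) by (auto simp: lb_def)
  have "\<bar>a*b\<bar> \<le> A*B" using A B by (simp add: abs_mult mult_mono')
  moreover have "\<bar>a'*b'\<bar> \<le> A*B" using A B by (simp add: abs_mult mult_mono')
  moreover have "\<bar>a*b - a'*b'\<bar> \<le> (A*Lb + B*La) * d"
  proof -
    have "a*b - a'*b' = (a - a')*b + a'*(b - b')" by (simp add: algebra_simps)
    then have "\<bar>a*b - a'*b'\<bar> \<le> \<bar>a - a'\<bar>*\<bar>b\<bar> + \<bar>a'\<bar>*\<bar>b - b'\<bar>"
      by (metis abs_mult abs_triangle_ineq)
    also have "\<dots> \<le> (La*d)*B + A*(Lb*d)"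
      apply (rule add_mono)
      using A B by (auto intro!: mult_mono)
    finally show ?thesis by (simp add: algebra_simps)
  qed
  ultimately show ?thesis by (simp add: lb_def)
qed

lemma lb_sum:
  assumes "finite S" "real (card S) \<le> n" "0 \<le> B" "0 \<le> L" "0 \<le> d"
    and "\<And>i. i \<in> S \<Longrightarrow> lb B L d (f i) (g i)"
  shows "lb (n*B) (n*L) d (sum f S) (sum g S)"
proof -
  have "\<bar>sum f S\<bar> \<le> (\<Sum>i\<in>S. \<bar>f i\<bar>)" by (rule sum_abs)
  also have "\<dots> \<le> (\<Sum>i\<in>S. B)" using assms(6) by (intro sum_mono) (auto simp: lb_def)
  also have "\<dots> \<le> n*B" using assms(2,3) by (simp add: mult_right_mono)
  finally have 1: "\<bar>sum f S\<bar> \<le> n*B" .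
  have "\<bar>sum g S\<bar> \<le> (\<Sum>i\<in>S. \<bar>g i\<bar>)" by (rule sum_abs)
  also have "\<dots> \<le> (\<Sum>i\<in>S. B)" using assms(6) by (intro sum_mono) (auto simp: lb_def)
  also have "\<dots> \<le> n*B" using assms(2,3) by (simp add: mult_right_mono)
  finally have 2: "\<bar>sum g S\<bar> \<le> n*B" .
  have "\<bar>sum f S - sum g S\<bar> = \<bar>\<Sum>i\<in>S. f i - g i\<bar>" by (simp add: sum_subtractf)
  also have "\<dots> \<le> (\<Sum>i\<in>S. \<bar>f i - g i\<bar>)" by (rule sum_abs)
  also have "\<dots> \<le> (\<Sum>i\<in>S. L*d)" using assms(6) by (intro sum_mono) (auto simp: lb_def)
  also have "\<dots> \<le> n*(L*d)" using assms(2,4,5) by (simp add: mult_right_mono)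
  finally have 3: "\<bar>sum f S - sum g S\<bar> \<le> n*L*d" by simp
  show ?thesis using 1 2 3 by (simp add: lb_def)
qed

lemma lb_mono: "lb B L d f g \<Longrightarrow> B \<le> B' \<Longrightarrow> L \<le> L' \<Longrightarrow> 0 \<le> d \<Longrightarrow> lb B' L' d f g"
  unfolding lb_def by (meson dual_order.trans mult_right_mono)

lemma lb_const: "\<bar>c\<bar> \<le> B \<Longrightarrow> 0 \<le> d \<Longrightarrow> lb B 0 d c c"
  unfolding lb_def by simp

lemma lb_add: "lb A La d a a' \<Longrightarrow> lb B Lb d b b' \<Longrightarrow> lb (A+B) (La+Lb) d (a+b) (a'+b')"
  unfolding lb_def distrib_right by (elim conjE, intro conjI; linarith)

lemma lb_one_minus: "lb A La d a a' \<Longrightarrow> lb (1+A) La d (1-a) (1-a')"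
  unfolding lb_def by auto

lemma finite_states: "finite U \<Longrightarrow> finite (states U K)"
  by (simp add: states_def)

lemma card_actions: "x \<in> states U K \<Longrightarrow> real (card (actions x)) \<le> real K + 1"
  by (auto simp: states_def actions_def)

lemma MPi_D: "s \<in> MPi U K \<Longrightarrow> is_distr U K (fst s) \<and> is_policy U K (snd s)"
  by (cases s) (auto simp: MPi_def)

lemma snorm_facts:
  assumes "finite U"
  shows "0 \<le> snorm_dist U K s s'"
    and "x \<in> states U K \<Longrightarrow> \<bar>fst s x - fst s' x\<bar> \<le> snorm_dist U K s s'"
    and "x \<in> states U K \<Longrightarrow> a \<in> actions x \<Longrightarrow> \<bar>snd s x a - snd s' x a\<bar> \<le> snorm_dist U K s s'"
proof -
  have fS: "finite (states U K)" using assms by (rule finite_states)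
  have fA: "finite (SIGMA x:states U K. actions x)"
    using fS by (auto simp: actions_def intro!: finite_SigmaI)
  let ?D = "insert 0 ((\<lambda>x. \<bar>fst s x - fst s' x\<bar>) ` states U K
                  \<union> (\<lambda>(x,a). \<bar>snd s x a - snd s' x a\<bar>) ` (SIGMA x:states U K. actions x))"
  have fD: "finite ?D" using fS fA by simp
  show "0 \<le> snorm_dist U K s s'" unfolding snorm_dist_def using fD by (intro Max_ge) auto
  show "x \<in> states U K \<Longrightarrow> \<bar>fst s x - fst s' x\<bar> \<le> snorm_dist U K s s'"
    unfolding snorm_dist_def using fD by (intro Max_ge) auto
  show "x \<in> states U K \<Longrightarrow> a \<in> actions x \<Longrightarrow> \<bar>snd s x a - snd s' x a\<bar> \<le> snorm_dist U K s s'"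
    unfolding snorm_dist_def using fD by (intro Max_ge) force+
qed

lemma distr_bound: "is_distr U K mu \<Longrightarrow> finite U \<Longrightarrow> x \<in> states U K \<Longrightarrow> \<bar>mu x\<bar> \<le> 1"
  unfolding is_distr_def
proof -
  assume h: "(\<forall>x\<in>states U K. 0 \<le> mu x) \<and> sum mu (states U K) = 1" "finite U" "x \<in> states U K"
  have "mu x \<le> sum mu (states U K)" using h finite_states[OF h(2)] by (intro member_le_sum) auto
  then show ?thesis using h by simp
qed

lemma policy_bound: "is_policy U K pol \<Longrightarrow> x \<in> states U K \<Longrightarrow> a \<in> actions x \<Longrightarrow> \<bar>pol x a\<bar> \<le> 1"
  unfolding is_policy_def
proof -
  assume h: "\<forall>x\<in>states U K. (\<forall>a\<in>actions x. 0 \<le> pol x a) \<and> sum (pol x) (actions x) = 1" "x \<in> states U K" "a \<in> actions x"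
  have "pol x a \<le> sum (pol x) (actions x)" using h by (intro member_le_sum) (auto simp: actions_def)
  then show ?thesis using h by simp
qed

lemma win_bound: "\<bar>win_prob a a'\<bar> \<le> 1"
  by (simp add: win_prob_def)


lemma basic_lb:
  assumes "finite U" "s \<in> MPi U K" "s' \<in> MPi U K"
  shows "x \<in> states U K \<Longrightarrow> lb 1 1 (snorm_dist U K s s') (fst s x) (fst s' x)"
    and "x \<in> states U K \<Longrightarrow> a \<in> actions x \<Longrightarrow> lb 1 1 (snorm_dist U K s s') (snd s x a) (snd s' x a)"
proof -
  have h: "is_distr U K (fst s)" "is_policy U K (snd s)" "is_distr U K (fst s')" "is_policy U K (snd s')"
    using MPi_D[OF assms(2)] MPi_D[OF assms(3)] by auto
  show "x \<in> states U K \<Longrightarrow> lb 1 1 (snorm_dist U K s s') (fst s x) (fst s' x)"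
    using distr_bound[OF h(1) assms(1)] distr_bound[OF h(3) assms(1)] snorm_facts(2)[OF assms(1), of x K s s']
    unfolding lb_def by simp
  show "x \<in> states U K \<Longrightarrow> a \<in> actions x \<Longrightarrow> lb 1 1 (snorm_dist U K s s') (snd s x a) (snd s' x a)"
    using policy_bound[OF h(2)] policy_bound[OF h(4)] snorm_facts(3)[OF assms(1), of x K a s s']
    unfolding lb_def by simp
qed

lemma gamma_lb:
  assumes "finite U" "s \<in> MPi U K" "s' \<in> MPi U K"
  defines "G \<equiv> real (card (states U K)) * (real K + 1)"
  shows "lb G (2*G) (snorm_dist U K s s') (gamma_win U K s a) (gamma_win U K s' a)"
proof -
  let ?d = "snorm_dist U K s s'"
  have d0: "0 \<le> ?d" using snorm_facts(1)[OF assms(1)] .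
  have inner: "lb 1 2 ?d (fst s x' * snd s x' a' * win_prob a a') (fst s' x' * snd s' x' a' * win_prob a a')"
    if "x' \<in> states U K" "a' \<in> actions x'" for x' a'
  proof -
    have "lb (1*1*1) (1*1*0 + 1*(1*1+1*1)) ?d (fst s x' * snd s x' a' * win_prob a a') (fst s' x' * snd s' x' a' * win_prob a a')"
      by (intro lb_mult lb_const basic_lb[OF assms(1-3)] that win_bound d0)
    then show ?thesis by simp
  qed
  have mid: "lb ((real K + 1)*1) ((real K + 1)*2) ?d (\<Sum>a'\<in>actions x'. fst s x' * snd s x' a' * win_prob a a')
      (\<Sum>a'\<in>actions x'. fst s' x' * snd s' x' a' * win_prob a a')"
    if "x' \<in> states U K" for x'
    by (rule lb_sum) (use card_actions[OF that] in \<open>auto simp: d0 inner that actions_def\<close>)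
  have "lb (real (card (states U K)) * ((real K + 1)*1)) (real (card (states U K)) * ((real K + 1)*2)) ?d
     (gamma_win U K s a) (gamma_win U K s' a)"
    unfolding gamma_win_def
    by (rule lb_sum[OF finite_states[OF assms(1)] _ _ _ d0 mid]) simp_all
  then show ?thesis unfolding G_def by (simp add: algebra_simps)
qed


lemma pbar_lb:
  assumes "finite U" "s \<in> MPi U K" "s' \<in> MPi U K"
  defines "G \<equiv> real (card (states U K)) * (real K + 1)"
  shows "lb (G*G*real K) (4*G*G*real K) (snorm_dist U K s s') (pbar U K s) (pbar U K s')"
proof -
  let ?d = "snorm_dist U K s s'"
  have d0: "0 \<le> ?d" using snorm_facts(1)[OF assms(1)] .
  have G0: "0 \<le> G" unfolding G_def by simp
  have g: "lb G (2*G) ?d (gamma_win U K s a) (gamma_win U K s' a)" for a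
    using gamma_lb[OF assms(1-3)] unfolding G_def .
  have inner: "lb (G*real K) (3*G*real K) ?d (snd s x a * gamma_win U K s a * real a) (snd s' x a * gamma_win U K s' a * real a)"
    if "x \<in> states U K" "a \<in> actions x" for x a
  proof -
    have aK: "\<bar>real a\<bar> \<le> real K" using that by (auto simp: states_def actions_def)
    have "lb (1*G*real K) (1*G*0 + real K*(1*(2*G) + G*1)) ?d (snd s x a * gamma_win U K s a * real a) (snd s' x a * gamma_win U K s' a * real a)"
      by (intro lb_mult lb_const basic_lb[OF assms(1-3)] that g aK d0)
    then show ?thesis by (simp add: algebra_simps)
  qed
  have mid: "lb ((real K + 1)*(G*real K)) ((real K + 1)*(3*G*real K)) ?d
      (\<Sum>a\<in>actions x. snd s x a * gamma_win U K s a * real a)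
      (\<Sum>a\<in>actions x. snd s' x a * gamma_win U K s' a * real a)"
    if "x \<in> states U K" for x
    by (rule lb_sum) (use card_actions[OF that] G0 in \<open>auto simp: d0 inner that actions_def\<close>)
  have mid2: "lb ((real K + 1)*(G*real K)) (4*((real K + 1)*(G*real K))) ?d
      (fst s x * (\<Sum>a\<in>actions x. snd s x a * gamma_win U K s a * real a))
      (fst s' x * (\<Sum>a\<in>actions x. snd s' x a * gamma_win U K s' a * real a))"
    if "x \<in> states U K" for x
  proof -
    have "lb (1*((real K + 1)*(G*real K))) (1*((real K + 1)*(3*G*real K)) + ((real K + 1)*(G*real K))*1) ?d
      (fst s x * (\<Sum>a\<in>actions x. snd s x a * gamma_win U K s a * real a))
      (fst s' x * (\<Sum>a\<in>actions x. snd s' x a * gamma_win U K s' a * real a))"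
      by (intro lb_mult basic_lb[OF assms(1-3)] that mid)
    then show ?thesis by (simp add: algebra_simps)
  qed
  have "lb (real (card (states U K)) * ((real K + 1)*(G*real K))) (real (card (states U K)) * (4*((real K + 1)*(G*real K)))) ?d
     (pbar U K s) (pbar U K s')"
    unfolding pbar_def
    by (rule lb_sum[OF finite_states[OF assms(1)] _ _ _ d0 mid2]) (simp_all add: G0)
  then show ?thesis unfolding G_def by (simp add: algebra_simps)
qed

lemma kw_tent: "kappa_win U K s k a kp = max 0 (1 - \<bar>real_of_int (int kp - int k + int a) - pbar U K s\<bar>)"
proof -
  have e1: "(int kp = int k - int a + \<lfloor>pbar U K s\<rfloor>) = (int kp - int k + int a = \<lfloor>pbar U K s\<rfloor>)" by arith
  have e2: "(int kp = int k - int a + \<lceil>pbar U K s\<rceil>) = (int kp - int k + int a = \<lceil>pbar U K s\<rceil>)" by arith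
  show ?thesis unfolding kappa_win_def f_high_def f_low_def e1 e2 by (rule tent)
qed

lemma kl_tent: "kappa_lose U K s k a kp = max 0 (1 - \<bar>real_of_int (int kp - int k) - pbar U K s\<bar>)"
proof -
  have e1: "(int kp = int k + \<lfloor>pbar U K s\<rfloor>) = (int kp - int k = \<lfloor>pbar U K s\<rfloor>)" by arith
  have e2: "(int kp = int k + \<lceil>pbar U K s\<rceil>) = (int kp - int k = \<lceil>pbar U K s\<rceil>)" by arith
  show ?thesis unfolding kappa_lose_def f_high_def f_low_def e1 e2 by (rule tent)
qed

lemma tent_lb: "lb B P d p p' \<Longrightarrow> lb 1 P d (max 0 (1 - \<bar>q - p\<bar>)) (max 0 (1 - \<bar>q - p'\<bar>))"
  unfolding lb_def using tent_lip[of q p p'] by auto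


lemma kappa_lb:
  assumes "finite U" "s \<in> MPi U K" "s' \<in> MPi U K"
  defines "G \<equiv> real (card (states U K)) * (real K + 1)"
  shows "lb (G + (1+G)) (G*(4*G*G*real K) + 1*(2*G) + ((1+G)*(4*G*G*real K) + 1*(2*G)))
     (snorm_dist U K s s') (kappa U K s k a kp) (kappa U K s' k a kp)"
proof -
  have g: "lb G (2*G) (snorm_dist U K s s') (gamma_win U K s a) (gamma_win U K s' a)"
    using gamma_lb[OF assms(1-3)] unfolding G_def .
  have p: "lb (G*G*real K) (4*G*G*real K) (snorm_dist U K s s') (pbar U K s) (pbar U K s')"
    using pbar_lb[OF assms(1-3)] unfolding G_def .
  have "lb (G*1 + (1+G)*1) (G*(4*G*G*real K) + 1*(2*G) + ((1+G)*(4*G*G*real K) + 1*(2*G)))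
     (snorm_dist U K s s') (kappa U K s k a kp) (kappa U K s' k a kp)"
    unfolding kappa_def kw_tent kl_tent
    by (intro lb_add lb_mult g lb_one_minus tent_lb[OF p])
  then show ?thesis by simp
qed

theorem lemma1:
  fixes U :: "real set" and K :: nat and phi :: "real \<Rightarrow> real \<Rightarrow> real"
  assumes "finite U" and "\<forall>u\<in>U. u > 0"
    and "\<forall>u\<in>U. \<forall>u'\<in>U. phi u u' \<ge> 0" and "\<forall>u\<in>U. (\<Sum>u'\<in>U. phi u u') = 1"
  shows "\<exists>Lr>0. \<exists>Lp>0. \<forall>s\<in>MPi U K. \<forall>s'\<in>MPi U K.
     (\<forall>x\<in>states U K. \<forall>a\<in>actions x.
        \<bar>reward U K s x a - reward U K s' x a\<bar> \<le> Lr * snorm_dist U K s s') \<and>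
     (\<forall>x\<in>states U K. \<forall>xp\<in>states U K. \<forall>a\<in>actions x.
        \<bar>trans_prob phi U K s x a xp - trans_prob phi U K s' x a xp\<bar> \<le> Lp * snorm_dist U K s s')"
proof -
  define G where "G = real (card (states U K)) * (real K + 1)"
  define Lk where "Lk = G*(4*G*G*real K) + 1*(2*G) + ((1+G)*(4*G*G*real K) + 1*(2*G))"
  define Ub where "Ub = (\<Sum>u\<in>U. \<bar>u\<bar>)"
  have G0: "0 \<le> G" unfolding G_def by simp
  have Lk0: "0 \<le> Lk" unfolding Lk_def using G0 by simp
  have Ub0: "0 \<le> Ub" unfolding Ub_def by (simp add: sum_nonneg)
  have ub: "\<bar>fst x\<bar> \<le> Ub" if "x \<in> states U K" for x
  proof -
    have "fst x \<in> U" using that by (auto simp: states_def)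
    then have "\<bar>\<bar>fst x\<bar>\<bar> \<le> Ub" unfolding Ub_def using assms(1)
      by (simp add: member_le_sum)
    then show ?thesis by simp
  qed
  have phib: "\<bar>phi (fst x) (fst xp)\<bar> \<le> 1" if "x \<in> states U K" "xp \<in> states U K" for x xp
  proof -
    have u: "fst x \<in> U" "fst xp \<in> U" using that by (auto simp: states_def)
    have "phi (fst x) (fst xp) \<le> (\<Sum>u'\<in>U. phi (fst x) u')"
      using u assms(1,3) by (intro member_le_sum) auto
    then show ?thesis using u assms(3,4) by auto
  qed
  have pos1: "0 < Ub*(2*G) + 1" using Ub0 G0 by (simp add: add_nonneg_pos)
  have pos2: "0 < Lk + 1" using Lk0 by simp
  show ?thesis
  proof (rule exI[of _ "Ub*(2*G) + 1"], rule conjI[OF pos1], rule exI[of _ "Lk + 1"], rule conjI[OF pos2],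
      intro ballI conjI)
    fix s s' x a assume s: "s \<in> MPi U K" "s' \<in> MPi U K" and x: "x \<in> states U K" "a \<in> actions x"
    let ?d = "snorm_dist U K s s'"
    have d0: "0 \<le> ?d" using snorm_facts(1)[OF assms(1)] .
    have g: "lb G (2*G) ?d (gamma_win U K s a) (gamma_win U K s' a)"
      using gamma_lb[OF assms(1) s] unfolding G_def .
    have "lb (Ub*G) (Ub*(2*G) + G*0) ?d (reward U K s x a) (reward U K s' x a)"
      unfolding reward_def by (intro lb_mult lb_const ub x g d0)
    then have "\<bar>reward U K s x a - reward U K s' x a\<bar> \<le> Ub*(2*G) * ?d" by (simp add: lb_def)
    also have "\<dots> \<le> (Ub*(2*G) + 1) * ?d" using d0 by (simp add: algebra_simps)
    finally show "\<bar>reward U K s x a - reward U K s' x a\<bar> \<le> (Ub*(2*G) + 1) * ?d" .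
  next
    fix s s' x xp a assume s: "s \<in> MPi U K" "s' \<in> MPi U K" and x: "x \<in> states U K" "xp \<in> states U K" "a \<in> actions x"
    let ?d = "snorm_dist U K s s'"
    have d0: "0 \<le> ?d" using snorm_facts(1)[OF assms(1)] .
    have k: "lb (G + (1+G)) Lk ?d (kappa U K s (snd x) a (snd xp)) (kappa U K s' (snd x) a (snd xp))"
      using kappa_lb[OF assms(1) s] unfolding G_def Lk_def .
    have "lb (1*(G + (1+G))) (1*Lk + (G + (1+G))*0) ?d (trans_prob phi U K s x a xp) (trans_prob phi U K s' x a xp)"
      unfolding trans_prob_def by (intro lb_mult lb_const phib x k d0)
    then have "\<bar>trans_prob phi U K s x a xp - trans_prob phi U K s' x a xp\<bar> \<le> Lk * ?d" by (simp add: lb_def)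
    also have "\<dots> \<le> (Lk + 1) * ?d" using d0 by (simp add: algebra_simps)
    finally show "\<bar>trans_prob phi U K s x a xp - trans_prob phi U K s' x a xp\<bar> \<le> (Lk + 1) * ?d" .
  qed
qed

end
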